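(* Let $\mathbf{T}\in\{0,1\}^{n\times\ell}$ be a matrix all of whose columns are dirty, with $\delta(\mathbf{T})\le 2$. If $\mathcal{T}_2\neq\emptyset$, then $\ell\le|\mathcal{T}_2|+1$.
   Context: A column of a binary matrix is dirty if it contains both $0$ and $1$. For rows $u,w\in\{0,1\}^\ell$, $D(u,w)=\{j\in[\ell]: u[j]\ne w[j]\}$ and $d(u,w)=|D(u,w)|$ (Hamming distance); $\delta(\mathbf{T})=\max_{i\ne i'}d(\mathbf{T}[i],\mathbf{T}[i'])$, where $\mathbf{T}[i]$ is the $i$-th row. For $x\in\mathbb{N}$, $\mathcal{T}_x$ is the set system (without duplicates) $\{D(\mathbf{T}[i],\mathbf{T}[n]) : i\in[n-1],\ d(\mathbf{T}[i],\mathbf{T}[n])=x\}$. *)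

theory Defs
  imports Main
begin

(* A binary n x l matrix is represented as T :: nat => nat => nat, with rows
   indexed by {1..n}, columns by {1..l}, entries T i j in {0,1}.
   Row i is the function T i (restricted to columns 1..l). *)

definition binary_matrix :: "nat \<Rightarrow> nat \<Rightarrow> (nat \<Rightarrow> nat \<Rightarrow> nat) \<Rightarrow> bool" where
  "binary_matrix n l T \<longleftrightarrow> (\<forall>i\<in>{1..n}. \<forall>j\<in>{1..l}. T i j \<in> {0, 1})"

definition dirty_column :: "nat \<Rightarrow> (nat \<Rightarrow> nat \<Rightarrow> nat) \<Rightarrow> nat \<Rightarrow> bool" where
  "dirty_column n T j \<longleftrightarrow> (\<exists>i\<in>{1..n}. T i j = 0) \<and> (\<exists>i\<in>{1..n}. T i j = 1)"

definition D :: "nat \<Rightarrow> (nat \<Rightarrow> nat) \<Rightarrow> (nat \<Rightarrow> nat) \<Rightarrow> nat set" where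
  "D l u w = {j \<in> {1..l}. u j \<noteq> w j}"

definition hdist :: "nat \<Rightarrow> (nat \<Rightarrow> nat) \<Rightarrow> (nat \<Rightarrow> nat) \<Rightarrow> nat" where
  "hdist l u w = card (D l u w)"

definition delta :: "nat \<Rightarrow> nat \<Rightarrow> (nat \<Rightarrow> nat \<Rightarrow> nat) \<Rightarrow> nat" where
  "delta n l T = Max ({hdist l (T i) (T i') | i i'. i \<in> {1..n} \<and> i' \<in> {1..n} \<and> i \<noteq> i'} \<union> {0})"

(* the set system T_x (a set of sets, so duplicates are removed automatically) *)
definition Tsys :: "nat \<Rightarrow> nat \<Rightarrow> (nat \<Rightarrow> nat \<Rightarrow> nat) \<Rightarrow> nat \<Rightarrow> nat set set" where
  "Tsys n l T x = {D l (T i) (T n) | i. i \<in> {1..n-1} \<and> hdist l (T i) (T n) = x}"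

end

theory Submission
  imports Defs
begin

lemma union_pairs_card:
  assumes fin: "finite F" and ne: "F \<noteq> {}"
    and two: "\<forall>Q\<in>F. card Q = 2"
    and inter: "\<forall>Q1\<in>F. \<forall>Q2\<in>F. Q1 \<inter> Q2 \<noteq> {}"
  shows "card (\<Union>F) \<le> card F + 1"
proof -
  obtain P where P: "P \<in> F" using ne by blast
  have finP: "finite P" using two P by (metis card.infinite zero_neq_numeral)
  have eq: "\<Union>F = P \<union> (\<Union>Q\<in>F-{P}. Q - P)" using P by blast
  have c1: "card (Q - P) \<le> 1" if "Q \<in> F" for Q
  proof -
    have "card Q = 2" using two that by blast
    moreover have "Q \<inter> P \<noteq> {}" using inter that P by blast
    moreover have "finite Q" using calculation by (metis card.infinite zero_neq_numeral)
    ultimately have "card (Q \<inter> P) \<ge> 1"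
      by (metis One_nat_def Suc_leI card_gt_0_iff finite_Int)
    moreover have "card (Q - P) = card Q - card (Q \<inter> P)"
      using \<open>finite Q\<close> by (metis Int_commute card_Diff_subset_Int finite_Int inf_le2 Diff_Int2 card_Diff_subset)
    ultimately show ?thesis using \<open>card Q = 2\<close> by linarith
  qed
  have "card (\<Union>F) \<le> card P + card (\<Union>Q\<in>F-{P}. Q - P)"
    unfolding eq by (rule card_Un_le)
  also have "card (\<Union>Q\<in>F-{P}. Q - P) \<le> (\<Sum>Q\<in>F-{P}. card (Q - P))"
    by (rule card_UN_le) (use fin in auto)
  also have "\<dots> \<le> (\<Sum>Q\<in>F-{P}. 1)"
    by (rule sum_mono) (use c1 in auto)
  also have "\<dots> = card F - 1" using fin P by simp
  finally have "card (\<Union>F) \<le> card P + (card F - 1)" by simp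
  moreover have "card P = 2" using two P by blast
  moreover have "card F \<ge> 1" using fin P by (simp add: Suc_leI card_gt_0_iff ne)
  ultimately show ?thesis by linarith
qed

lemma D_symdiff:
  "(D l u r - D l w r) \<union> (D l w r - D l u r) \<subseteq> D l u w"
  unfolding D_def by auto

lemma delta_ge:
  assumes "i \<in> {1..n}" "i' \<in> {1..n}" "i \<noteq> i'"
  shows "hdist l (T i) (T i') \<le> delta n l T"
proof -
  have "{hdist l (T i) (T i') | i i'. i \<in> {1..n} \<and> i' \<in> {1..n} \<and> i \<noteq> i'}
        \<subseteq> (\<lambda>(i,i'). hdist l (T i) (T i')) ` ({1..n} \<times> {1..n})" by auto
  hence fin: "finite ({hdist l (T i) (T i') | i i'. i \<in> {1..n} \<and> i' \<in> {1..n} \<and> i \<noteq> i'} \<union> {0})"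
    by (meson finite_Un finite_SigmaI finite_atLeastAtMost finite_imageI finite_insert finite.emptyI finite_subset)
  show ?thesis unfolding delta_def
    by (rule Max_ge[OF fin]) (use assms in blast)
qed

theorem lemma9:
  fixes n l :: nat and T :: "nat \<Rightarrow> nat \<Rightarrow> nat"
  assumes "binary_matrix n l T"
    and "\<forall>j\<in>{1..l}. dirty_column n T j"
    and "delta n l T \<le> 2"
    and "Tsys n l T 2 \<noteq> {}"
  shows "l \<le> card (Tsys n l T 2) + 1"
proof -
  define F where "F = Tsys n l T 2"
  define Dr where "Dr = (\<lambda>i. D l (T i) (T n))"
  have finD: "finite (D l u w)" for u w unfolding D_def by auto
  have Dsub: "D l u w \<subseteq> {1..l}" for u w unfolding D_def by auto
  have hd: "card (D l (T i) (T i')) \<le> 2" if "i \<in> {1..n}" "i' \<in> {1..n}" "i \<noteq> i'" for i i'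
    using delta_ge[OF that, of l T] assms(3) unfolding hdist_def by linarith
  have Fmem: "Q \<in> F \<longleftrightarrow> (\<exists>i. i \<in> {1..n-1} \<and> card (Dr i) = 2 \<and> Q = Dr i)" for Q
    unfolding F_def Tsys_def Dr_def hdist_def by auto
  have finF: "finite F"
  proof (rule finite_subset[of _ "Pow {1..l}"])
    show "F \<subseteq> Pow {1..l}"
    proof
      fix Q assume "Q \<in> F"
      then obtain i where "Q = Dr i" using Fmem by blast
      then show "Q \<in> Pow {1..l}" using Dsub unfolding Dr_def by simp
    qed
  qed simp
  have two: "\<forall>Q\<in>F. card Q = 2" using Fmem by auto
  have card_sd: "card (D l (T i) (T k)) \<ge> card ((Dr i - Dr k) \<union> (Dr k - Dr i))" for i k
    by (rule card_mono[OF finD]) (unfold Dr_def, rule D_symdiff)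
  have inter: "\<forall>Q1\<in>F. \<forall>Q2\<in>F. Q1 \<inter> Q2 \<noteq> {}"
  proof (intro ballI notI)
    fix Q1 Q2 assume q: "Q1 \<in> F" "Q2 \<in> F" "Q1 \<inter> Q2 = {}"
    obtain i where i: "i \<in> {1..n-1}" "card (Dr i) = 2" "Q1 = Dr i" using q(1) Fmem by blast
    obtain k where k: "k \<in> {1..n-1}" "card (Dr k) = 2" "Q2 = Dr k" using q(2) Fmem by blast
    note ik = i(1) k(1) i(2) k(2) i(3) k(3)
    have "i \<noteq> k"
    proof
      assume "i = k"
      hence "Q1 = {}" using ik q(3) by simp
      thus False using ik by simp
    qed
    have "(Dr i - Dr k) \<union> (Dr k - Dr i) = Dr i \<union> Dr k" using q ik by blast
    moreover have "card (Dr i \<union> Dr k) = 4" using q ik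
      using card_Un_disjoint[of "Dr i" "Dr k"] finD unfolding Dr_def by simp
    ultimately have "card (D l (T i) (T k)) \<ge> 4" using card_sd[of i k] by simp
    moreover have "card (D l (T i) (T k)) \<le> 2" using hd[of i k] ik \<open>i \<noteq> k\<close> by auto
    ultimately show False by simp
  qed
  obtain P where P: "P \<in> F" using assms(4) F_def by blast
  have cover: "{1..l} \<subseteq> \<Union>F"
  proof
    fix j assume j: "j \<in> {1..l}"
    obtain a b where ab: "a \<in> {1..n}" "T a j = 0" "b \<in> {1..n}" "T b j = 1"
      using assms(2) j unfolding dirty_column_def by blast
    obtain i where i: "i \<in> {1..n}" "T i j \<noteq> T n j"
    proof (cases "T n j = 0")
      case True thus ?thesis using that ab(3,4) by simp
    next
      case False thus ?thesis using that ab(1,2) by simp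
    qed
    have "i \<noteq> n" using i by blast
    hence i1: "i \<in> {1..n-1}" using i by auto
    have jD: "j \<in> Dr i" unfolding Dr_def D_def using j i by auto
    have c2: "card (Dr i) \<le> 2" using hd[of i n] i \<open>i \<noteq> n\<close> i1 unfolding Dr_def by auto
    have c1: "card (Dr i) \<ge> 1" using jD finD Dr_def
      by (metis One_nat_def Suc_leI card_gt_0_iff empty_iff)
    show "j \<in> \<Union>F"
    proof (cases "card (Dr i) = 2")
      case True
      then show ?thesis using Fmem i1 jD by blast
    next
      case False
      hence "card (Dr i) = 1" using c1 c2 by linarith
      hence single: "Dr i = {j}" using jD by (metis card_1_singletonE singletonD)
      obtain k where k: "k \<in> {1..n-1}" "card (Dr k) = 2" "P = Dr k" using P Fmem by blast
      have "i \<noteq> k" using k False by blast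
      show ?thesis
      proof (rule ccontr)
        assume "j \<notin> \<Union>F"
        hence "j \<notin> Dr k" using P k by blast
        hence "(Dr i - Dr k) \<union> (Dr k - Dr i) = insert j (Dr k)" using single by auto
        moreover have "card (insert j (Dr k)) = 3" using \<open>j \<notin> Dr k\<close> k finD Dr_def by simp
        ultimately have "card (D l (T i) (T k)) \<ge> 3" using card_sd[of i k] by simp
        moreover have "card (D l (T i) (T k)) \<le> 2" using hd[of i k] i1 k \<open>i \<noteq> k\<close> by auto
        ultimately show False by simp
      qed
    qed
  qed
  have finU: "finite (\<Union>F)" using finF two by (metis card.infinite finite_Union zero_neq_numeral)
  have "l = card {1..l}" by simp
  also have "\<dots> \<le> card (\<Union>F)" by (rule card_mono[OF finU cover])
  also have "\<dots> \<le> card F + 1" by (rule union_pairs_card[OF finF _ two inter]) (use P in auto)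
  finally show ?thesis unfolding F_def .
qed

end
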